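(* Let $a \geq 1$ and consider the scalar system $X_{n+1} = a X_n + Z_n - U_n$, $n=1,2,\ldots$, where $X_1, Z_1, Z_2, \ldots$ are independent real random variables and $X_1$ has a probability density. If an $M$-bin causal quantizer-controller makes the system stabilizable in probability, i.e. there is a bounded interval $\mathcal I \subset \mathbb{R}$ with $\limsup_{n\to\infty} \mathbb{P}[X_n \in \mathcal I] > 0$, then $M \geq \lceil a \rceil$.
   Context: An $M$-bin causal quantizer-controller is a sequence $\{\mathsf f_n, \mathsf g_n\}_{n=1}^\infty$ of (measurable) maps $\mathsf f_n \colon \mathbb{R}^n \to [M] = \{1,\ldots,M\}$ and $\mathsf g_n \colon [M]^n \to \mathbb{R}$; the control at time $n$ is $U_n = \mathsf g_n(\mathsf f_1(X_1), \mathsf f_2(X_1,X_2), \ldots, \mathsf f_n(X_1,\ldots,X_n))$. *)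

theory Defs
  imports "HOL-Probability.Probability"
begin

text \<open>Vectors in R^k / [M]^k are represented as extensional functions on {1..k}.\<close>
definition qc_control ::
  "(nat \<Rightarrow> (nat \<Rightarrow> real) \<Rightarrow> nat) \<Rightarrow> (nat \<Rightarrow> (nat \<Rightarrow> nat) \<Rightarrow> real) \<Rightarrow> nat \<Rightarrow> (nat \<Rightarrow> real) \<Rightarrow> real"
  where "qc_control f g n x =
     g n (restrict (\<lambda>k. f k (restrict x {1..k})) {1..n})"

definition causal_quantizer :: "nat \<Rightarrow> (nat \<Rightarrow> (nat \<Rightarrow> real) \<Rightarrow> nat) \<Rightarrow> bool"
  where "causal_quantizer Mb f \<longleftrightarrow>
     (\<forall>n\<ge>1. f n \<in> PiM {1..n} (\<lambda>_. borel) \<rightarrow>\<^sub>M count_space {1..Mb})"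

end

theory Submission
  imports Defs
begin




lemma abs_cont:
  fixes h :: "real \<Rightarrow> ennreal"
  assumes hm[measurable]: "h \<in> borel_measurable lborel" and fin: "(\<integral>\<^sup>+ x. h x \<partial>lborel) < \<infinity>"
    and e: "(0::real) < e"
  shows "\<exists>d>0. \<forall>S\<in>sets lborel. emeasure lborel S \<le> ennreal d \<longrightarrow> (\<integral>\<^sup>+ x. h x * indicator S x \<partial>lborel) \<le> ennreal e"
proof -
  define T where "T = (\<lambda>i::nat. \<lambda>x. h x * indicator {x. ennreal (real i) < h x} x)"
  have Tm[measurable]: "T i \<in> borel_measurable lborel" for i unfolding T_def by measurable
  have dec: "AE x in lborel. T (Suc i) x \<le> T i x" for i
  proof (intro AE_I2)
    fix x
    have "ennreal (real i) \<le> ennreal (real (Suc i))" by (intro ennreal_leI) auto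
    then have "ennreal (real (Suc i)) < h x \<Longrightarrow> ennreal (real i) < h x" by (rule le_less_trans)
    then show "T (Suc i) x \<le> T i x" unfolding T_def indicator_def by auto
  qed
  have T0: "(\<integral>\<^sup>+ x. T 0 x \<partial>lborel) < \<infinity>"
    using fin by (rule le_less_trans[rotated]) (auto simp: T_def intro!: nn_integral_mono mult_right_le_one_le simp: indicator_def)
  have "AE x in lborel. h x \<noteq> \<infinity>" using nn_integral_PInf_AE[OF hm] fin by auto
  then have "AE x in lborel. (INF i. T i x) = 0"
  proof (rule AE_mp, intro AE_I2 impI)
    fix x assume "h x \<noteq> \<infinity>"
    then obtain r where r: "h x = ennreal r" "r \<ge> 0" by (cases "h x") auto
    obtain i :: nat where "r < real i" using reals_Archimedean2 by blast
    then have "T i x = 0" using r by (auto simp: T_def indicator_def ennreal_less_iff)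
    then show "(INF i. T i x) = 0" by (metis INF_lower UNIV_I bot.extremum_uniqueI bot_ennreal)
  qed
  then have "(\<integral>\<^sup>+ x. (INF i. T i x) \<partial>lborel) = 0" by (simp add: nn_integral_0_iff_AE)
  then have "(INF i. integral\<^sup>N lborel (T i)) = 0"
    using nn_integral_monotone_convergence_INF_AE'[OF dec Tm T0] by simp
  then have "(INF i. integral\<^sup>N lborel (T i)) < ennreal (e/2)" using e by simp
  then obtain i where i: "integral\<^sup>N lborel (T i) < ennreal (e/2)" by (auto simp: INF_less_iff)
  define d where "d = e / (2 * (real i + 1))"
  have d: "d > 0" using e by (simp add: d_def)
  show ?thesis
  proof (intro exI[of _ d] conjI d ballI impI)
    fix S :: "real set" assume S[measurable]: "S \<in> sets lborel" and Sd: "emeasure lborel S \<le> ennreal d"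
    have "(\<integral>\<^sup>+ x. h x * indicator S x \<partial>lborel) \<le> (\<integral>\<^sup>+ x. ennreal (real i) * indicator S x + T i x \<partial>lborel)"
      by (intro nn_integral_mono) (auto simp: T_def indicator_def not_less)
    also have "\<dots> = (\<integral>\<^sup>+ x. ennreal (real i) * indicator S x \<partial>lborel) + integral\<^sup>N lborel (T i)"
      by (rule nn_integral_add) auto
    also have "\<dots> = ennreal (real i) * emeasure lborel S + integral\<^sup>N lborel (T i)"
      by (subst nn_integral_cmult_indicator[OF S]) (rule refl)
    also have "\<dots> \<le> ennreal (real i) * ennreal d + ennreal (e/2)"
      by (intro add_mono mult_left_mono[OF Sd] less_imp_le[OF i]) simp
    also have "\<dots> = ennreal (real i * d + e/2)"
      using d e by (simp add: ennreal_mult'' ennreal_plus[symmetric])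
    also have "\<dots> \<le> ennreal e"
    proof (intro ennreal_leI)
      have "real i * d \<le> e/2" using e by (simp add: d_def field_simps)
      then show "real i * d + e/2 \<le> e" by simp
    qed
    finally show "(\<integral>\<^sup>+ x. h x * indicator S x \<partial>lborel) \<le> ennreal e" .
  qed
qed


theorem theorem3:
  fixes P :: "'s measure"
    and a :: real and Mb :: nat
    and X Z :: "nat \<Rightarrow> 's \<Rightarrow> real"
    and f :: "nat \<Rightarrow> (nat \<Rightarrow> real) \<Rightarrow> nat"
    and g :: "nat \<Rightarrow> (nat \<Rightarrow> nat) \<Rightarrow> real"
  assumes "prob_space P"
    and "a \<ge> 1"
    and indep: "prob_space.indep_vars P (\<lambda>_. borel) (\<lambda>i. if i = 0 then X 1 else Z i) UNIV"
    and dens: "\<exists>h. distributed P lborel (X 1) h"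
    and quant: "causal_quantizer Mb f"
    and dyn: "\<And>n \<omega>. n \<ge> 1 \<Longrightarrow> \<omega> \<in> space P \<Longrightarrow>
               X (Suc n) \<omega> = a * X n \<omega> + Z n \<omega> - qc_control f g n (\<lambda>i. X i \<omega>)"
    and stab: "\<exists>I :: real set. bounded I \<and> is_interval I \<and>
               limsup (\<lambda>n. ereal (measure P {\<omega> \<in> space P. X n \<omega> \<in> I})) > 0"
  shows "int Mb \<ge> \<lceil>a\<rceil>"
proof (rule ccontr)
  interpret prob_space P by fact
  assume "\<not> int Mb \<ge> \<lceil>a\<rceil>"
  then have Ma: "real Mb < a" by (simp add: ceiling_le_iff)
  have a1: "a \<ge> 1" by fact
  obtain I :: "real set" where Ib: "bounded I"
    and Ilim: "limsup (\<lambda>n. ereal (measure P {\<omega> \<in> space P. X n \<omega> \<in> I})) > 0"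
    using stab by blast
  obtain R c0 where IR: "I \<subseteq> cball c0 R" and R0: "0 \<le> R" using Ib bounded_subset_cball by blast
  obtain h where D: "distributed P lborel (X 1) h" using dens by blast
  have hm[measurable]: "h \<in> borel_measurable lborel" and Dd: "distr P lborel (X 1) = density lborel h"
    and X1m: "X 1 \<in> measurable P lborel" using D by (auto simp: distributed_def)
  have X1b[measurable]: "X 1 \<in> borel_measurable P" using X1m by simp
  have hfin: "(\<integral>\<^sup>+ x. h x \<partial>lborel) < \<infinity>"
  proof -
    have "(\<integral>\<^sup>+ x. h x \<partial>lborel) = emeasure (density lborel h) UNIV"
      by (simp add: emeasure_density)
    also have "\<dots> = emeasure (distr P lborel (X 1)) (space (distr P lborel (X 1)))"
      unfolding Dd by simp
    also have "\<dots> = 1" by (rule prob_space.emeasure_space_1[OF prob_space_distr[OF X1m]])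
    finally show ?thesis by simp
  qed
  define Cs where "Cs = (\<lambda>m::nat. PiE {1..m} (\<lambda>_. {1..Mb}))"
  define gam where "gam = (\<lambda>m c. \<Sum>k\<in>{1..m}. a^(m-k) * g k (restrict c {1..k}))"
  define Gam where "Gam = (\<lambda>m. gam m ` Cs m)"
  define Y where "Y = (\<lambda>m \<omega>. \<Sum>k\<in>{1..m}. a^(m-k) * Z k \<omega>)"
  define cw where "cw = (\<lambda>m \<omega>. restrict (\<lambda>k. f k (restrict (\<lambda>i. X i \<omega>) {1..k})) {1..m})"
  define G where "G = (\<lambda>m \<omega>. \<Sum>k\<in>{1..m}. a^(m-k) * g k (cw k \<omega>))"
  have traj: "X (Suc m) \<omega> = a^m * X 1 \<omega> + Y m \<omega> - G m \<omega>" if "\<omega> \<in> space P" for m \<omega>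
  proof (induction m)
    case 0
    then show ?case by (simp add: Y_def G_def)
  next
    case (Suc m)
    have q: "qc_control f g (Suc m) (\<lambda>i. X i \<omega>) = g (Suc m) (cw (Suc m) \<omega>)"
      by (simp add: qc_control_def cw_def)
    have "X (Suc (Suc m)) \<omega> = a * X (Suc m) \<omega> + Z (Suc m) \<omega> - g (Suc m) (cw (Suc m) \<omega>)"
      using dyn[of "Suc m" \<omega>] that q by simp
    also have "\<dots> = a^(Suc m) * X 1 \<omega> + (a * Y m \<omega> + Z (Suc m) \<omega>) - (a * G m \<omega> + g (Suc m) (cw (Suc m) \<omega>))"
      by (simp add: Suc.IH algebra_simps)
    also have "a * Y m \<omega> + Z (Suc m) \<omega> = Y (Suc m) \<omega>"
    proof -
      have "(\<Sum>k\<in>{1..m}. a^(Suc m - k) * Z k \<omega>) = (\<Sum>k\<in>{1..m}. a * (a^(m-k) * Z k \<omega>))"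
        by (intro sum.cong refl) (simp add: Suc_diff_le)
      then show ?thesis unfolding Y_def by (simp add: sum.cl_ivl_Suc sum_distrib_left)
    qed
    also have "a * G m \<omega> + g (Suc m) (cw (Suc m) \<omega>) = G (Suc m) \<omega>"
    proof -
      have "(\<Sum>k\<in>{1..m}. a^(Suc m - k) * g k (cw k \<omega>)) = (\<Sum>k\<in>{1..m}. a * (a^(m-k) * g k (cw k \<omega>)))"
        by (intro sum.cong refl) (simp add: Suc_diff_le)
      then show ?thesis unfolding G_def by (simp add: sum.cl_ivl_Suc sum_distrib_left)
    qed
    finally show ?case .
  qed
  have cwC: "cw m \<omega> \<in> Cs m" for m \<omega>
  proof -
    have "f k (restrict (\<lambda>i. X i \<omega>) {1..k}) \<in> {1..Mb}" if "k \<in> {1..m}" for k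
    proof -
      have "f k \<in> PiM {1..k} (\<lambda>_. borel) \<rightarrow>\<^sub>M count_space {1..Mb}"
        using quant that unfolding causal_quantizer_def by auto
      from measurable_space[OF this] show ?thesis by (simp add: space_PiM)
    qed
    then show ?thesis unfolding Cs_def cw_def by auto
  qed
  have Gg: "G m \<omega> = gam m (cw m \<omega>)" for m \<omega>
  proof -
    have r: "restrict (cw m \<omega>) {1..k} = cw k \<omega>" if "k \<le> m" for k
      using that by (auto simp: cw_def fun_eq_iff)
    show ?thesis unfolding G_def gam_def
    proof (intro sum.cong refl)
      fix k assume "k \<in> {1..m}"
      then have "k \<le> m" by simp
      show "a^(m-k) * g k (cw k \<omega>) = a^(m-k) * g k (restrict (cw m \<omega>) {1..k})"
        by (simp only: r[OF \<open>k \<le> m\<close>])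
    qed
  qed
  have GamF: "finite (Gam m)" for m unfolding Gam_def Cs_def by (auto intro!: finite_PiE)
  have GamC: "card (Gam m) \<le> Mb ^ m" for m
  proof -
    have "card (Gam m) \<le> card (Cs m)" unfolding Gam_def by (rule card_image_le) (auto simp: Cs_def intro!: finite_PiE)
    also have "\<dots> = Mb ^ m" by (simp add: Cs_def card_PiE)
    finally show ?thesis .
  qed
  have Ym[measurable]: "Y m \<in> borel_measurable P" for m
  proof -
    have "Z k \<in> borel_measurable P" if "k \<ge> 1" for k
      using indep that unfolding indep_vars_def by (metis (mono_tags, lifting) UNIV_I not_one_le_zero)
    then show ?thesis unfolding Y_def by (intro borel_measurable_sum borel_measurable_times) auto
  qed
  have ind: "indep_var borel (X 1) borel (Y m)" for m
  proof -
    define V where "V = (\<lambda>i::nat. \<lambda>x::real. if i = 0 then x else a^(m-i) * x)"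
    have "indep_vars (\<lambda>_. borel) (\<lambda>i \<omega>. V i ((\<lambda>i. if i = 0 then X 1 else Z i) i \<omega>)) UNIV"
      by (rule indep_vars_compose2[OF indep]) (auto simp: V_def)
    then have "indep_vars (\<lambda>_. borel) (\<lambda>i \<omega>. V i ((\<lambda>i. if i = 0 then X 1 else Z i) i \<omega>)) (insert 0 {1..m})"
      by (rule indep_vars_subset) auto
    from indep_vars_sum[OF _ _ this] have
      "indep_var borel (\<lambda>\<omega>. V 0 ((\<lambda>i. if i = 0 then X 1 else Z i) 0 \<omega>)) borel
         (\<lambda>\<omega>. \<Sum>i\<in>{1..m}. V i ((\<lambda>i. if i = 0 then X 1 else Z i) i \<omega>))" by simp
    also have "(\<lambda>\<omega>. V 0 ((\<lambda>i. if i = 0 then X 1 else Z i) 0 \<omega>)) = X 1" by (simp add: V_def fun_eq_iff)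
    also have "(\<lambda>\<omega>. \<Sum>i\<in>{1..m}. V i ((\<lambda>i. if i = 0 then X 1 else Z i) i \<omega>)) = Y m"
      by (auto simp: V_def Y_def fun_eq_iff intro!: sum.cong)
    finally show ?thesis .
  qed
  have apos: "a^m > 0" for m using a1 by simp
  define A where "A = (\<lambda>m. \<Union>\<gamma>\<in>Gam m. {p::real\<times>real. dist (a^m * fst p + snd p - \<gamma>) c0 \<le> R})"
  have Am: "A m \<in> sets (borel \<Otimes>\<^sub>M borel)" for m
    unfolding A_def
  proof (intro sets.finite_UN GamF)
    fix \<gamma>
    have "{p::real\<times>real. dist (a^m * fst p + snd p - \<gamma>) c0 \<le> R} =
        {p \<in> space (borel \<Otimes>\<^sub>M borel). dist (a^m * fst p + snd p - \<gamma>) c0 \<le> R}"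
      by (simp add: space_pair_measure)
    also have "\<dots> \<in> sets (borel \<Otimes>\<^sub>M borel)" by measurable
    finally show "{p::real\<times>real. dist (a^m * fst p + snd p - \<gamma>) c0 \<le> R} \<in> sets (borel \<Otimes>\<^sub>M borel)" .
  qed
  have sec: "(\<lambda>x. (x, y)) -` A m = (\<Union>\<gamma>\<in>Gam m. {(\<gamma> + c0 - y - R)/a^m .. (\<gamma> + c0 - y + R)/a^m})" for m y
  proof -
    have "dist (a^m * x + y - \<gamma>) c0 \<le> R \<longleftrightarrow> x \<in> {(\<gamma> + c0 - y - R)/a^m .. (\<gamma> + c0 - y + R)/a^m}" for x \<gamma>
      using apos[of m] by (auto simp: dist_real_def abs_le_iff pos_divide_le_eq pos_le_divide_eq algebra_simps)
    then show ?thesis unfolding A_def by auto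
  qed
  have secs: "(\<lambda>x. (x, y)) -` A m \<in> sets borel" for m y
    unfolding sec by (intro sets.finite_UN GamF) auto
  have secm: "emeasure lborel ((\<lambda>x. (x, y)) -` A m) \<le> ennreal (real Mb ^ m * (2*R) / a^m)" for m y
  proof -
    have "emeasure lborel ((\<lambda>x. (x, y)) -` A m) \<le> (\<Sum>\<gamma>\<in>Gam m. emeasure lborel {(\<gamma> + c0 - y - R)/a^m .. (\<gamma> + c0 - y + R)/a^m})"
      unfolding sec by (intro emeasure_subadditive_finite GamF) auto
    also have "\<dots> = (\<Sum>\<gamma>\<in>Gam m. ennreal (2*R/a^m))"
    proof (intro sum.cong refl)
      fix \<gamma>
      have le: "(\<gamma> + c0 - y - R)/a^m \<le> (\<gamma> + c0 - y + R)/a^m"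
        using apos[of m] R0 by (intro divide_right_mono) auto
      have "(\<gamma> + c0 - y + R)/a^m - (\<gamma> + c0 - y - R)/a^m = 2*R/a^m"
        by (simp add: diff_divide_distrib[symmetric])
      then show "emeasure lborel {(\<gamma> + c0 - y - R)/a^m .. (\<gamma> + c0 - y + R)/a^m} = ennreal (2*R/a^m)"
        using emeasure_lborel_Icc[OF le] by simp
    qed
    also have "\<dots> = ennreal (real (card (Gam m)) * (2*R/a^m))"
      using R0 apos[of m] by (subst ennreal_mult) (auto simp: ennreal_of_nat_eq_real_of_nat)
    also have "\<dots> \<le> ennreal (real Mb ^ m * (2*R) / a^m)"
    proof (intro ennreal_leI)
      have "real (card (Gam m)) \<le> real Mb ^ m" using GamC[of m] by (metis of_nat_le_iff of_nat_power)
      then have "real (card (Gam m)) * (2*R/a^m) \<le> real Mb ^ m * (2*R/a^m)"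
        using R0 apos[of m] by (intro mult_right_mono) auto
      then show "real (card (Gam m)) * (2*R/a^m) \<le> real Mb ^ m * (2*R) / a^m" by simp
    qed
    finally show ?thesis .
  qed
  have D1: "emeasure (distr P borel (X 1)) S = (\<integral>\<^sup>+ x. h x * indicator S x \<partial>lborel)" if S: "S \<in> sets borel" for S
  proof -
    have "emeasure (distr P borel (X 1)) S = emeasure P (X 1 -` S \<inter> space P)"
      by (rule emeasure_distr[OF X1b S])
    also have "\<dots> = emeasure (distr P lborel (X 1)) S"
      using S by (intro emeasure_distr[symmetric] X1m) simp
    also have "\<dots> = emeasure (density lborel h) S" unfolding Dd ..
    also have "\<dots> = (\<integral>\<^sup>+ x. h x * indicator S x \<partial>lborel)" using S by (subst emeasure_density) auto
    finally show ?thesis .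
  qed
  have bound: "measure P {\<omega> \<in> space P. X (Suc m) \<omega> \<in> I} \<le> e"
    if dm: "real Mb ^ m * (2*R) / a^m \<le> d"
      and dAC: "\<forall>S\<in>sets lborel. emeasure lborel S \<le> ennreal d \<longrightarrow> (\<integral>\<^sup>+ x. h x * indicator S x \<partial>lborel) \<le> ennreal e"
      and e0: "e > 0" for m d e
  proof -
    define E where "E = {\<omega> \<in> space P. (X 1 \<omega>, Y m \<omega>) \<in> A m}"
    have pm: "(\<lambda>\<omega>. (X 1 \<omega>, Y m \<omega>)) \<in> measurable P (borel \<Otimes>\<^sub>M borel)" by measurable
    have Eev: "E \<in> events"
    proof -
      have "E = (\<lambda>\<omega>. (X 1 \<omega>, Y m \<omega>)) -` A m \<inter> space P" unfolding E_def by auto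
      with measurable_sets[OF pm Am] show ?thesis by simp
    qed
    have PSF: "pair_sigma_finite (distr P borel (X 1)) (distr P borel (Y m))"
      unfolding pair_sigma_finite_def by (intro conjI prob_space_imp_sigma_finite prob_space_distr X1b Ym)
    have sp: "sets (distr P borel (X 1) \<Otimes>\<^sub>M distr P borel (Y m)) = sets (borel \<Otimes>\<^sub>M borel)"
      by (intro sets_pair_measure_cong) simp_all
    have "emeasure P E = emeasure (distr P (borel \<Otimes>\<^sub>M borel) (\<lambda>\<omega>. (X 1 \<omega>, Y m \<omega>))) (A m)"
      using pm Am by (subst emeasure_distr) (auto simp: E_def intro!: arg_cong[where f="emeasure P"])
    also have "distr P (borel \<Otimes>\<^sub>M borel) (\<lambda>\<omega>. (X 1 \<omega>, Y m \<omega>)) = distr P borel (X 1) \<Otimes>\<^sub>M distr P borel (Y m)"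
      using ind[of m] by (simp add: indep_var_distribution_eq)
    also have "emeasure (distr P borel (X 1) \<Otimes>\<^sub>M distr P borel (Y m)) (A m) =
        (\<integral>\<^sup>+ y. emeasure (distr P borel (X 1)) ((\<lambda>x. (x, y)) -` A m) \<partial>distr P borel (Y m))"
      by (rule pair_sigma_finite.emeasure_pair_measure_alt2[OF PSF]) (simp add: sp Am)
    also have "\<dots> \<le> (\<integral>\<^sup>+ y. ennreal e \<partial>distr P borel (Y m))"
    proof (intro nn_integral_mono)
      fix y
      have s1: "emeasure lborel ((\<lambda>x. (x, y)) -` A m) \<le> ennreal (real Mb ^ m * (2*R) / a^m)"
        by (rule secm)
      have s2: "(\<lambda>x. (x, y)) -` A m \<in> sets borel" by (rule secs)
      have "emeasure lborel ((\<lambda>x. (x, y)) -` A m) \<le> ennreal d"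
        using s1 dm by (meson ennreal_leI order_trans)
      then show "emeasure (distr P borel (X 1)) ((\<lambda>x. (x, y)) -` A m) \<le> ennreal e"
        unfolding D1[OF s2] using dAC s2 by simp
    qed
    also have "\<dots> = ennreal e"
      using prob_space.emeasure_space_1[OF prob_space_distr[OF Ym[of m]]] by simp
    finally have "measure P E \<le> e" using e0 by (simp add: emeasure_eq_measure)
    moreover have "measure P {\<omega> \<in> space P. X (Suc m) \<omega> \<in> I} \<le> measure P E"
    proof (cases "{\<omega> \<in> space P. X (Suc m) \<omega> \<in> I} \<in> events")
      case True
      show ?thesis
      proof (rule finite_measure_mono[OF _ Eev])
        show "{\<omega> \<in> space P. X (Suc m) \<omega> \<in> I} \<subseteq> E"
        proof safe
          fix \<omega> assume \<omega>: "\<omega> \<in> space P" and xi: "X (Suc m) \<omega> \<in> I"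
          have "dist (a^m * X 1 \<omega> + Y m \<omega> - gam m (cw m \<omega>)) c0 \<le> R"
            using traj[OF \<omega>, of m] Gg[of m \<omega>] xi IR by (auto simp: dist_commute)
          moreover have "gam m (cw m \<omega>) \<in> Gam m" using cwC[of m \<omega>] by (simp add: Gam_def)
          ultimately show "\<omega> \<in> E" using \<omega> by (auto simp: E_def A_def)
        qed
      qed
    next
      case False
      then show ?thesis by (simp add: measure_notin_sets)
    qed
    ultimately show ?thesis by linarith
  qed
  have ev: "eventually (\<lambda>n. measure P {\<omega> \<in> space P. X n \<omega> \<in> I} \<le> e) sequentially" if e0: "e > 0" for e
  proof -
    obtain d where d0: "d > 0" and dAC: "\<forall>S\<in>sets lborel. emeasure lborel S \<le> ennreal d \<longrightarrow> (\<integral>\<^sup>+ x. h x * indicator S x \<partial>lborel) \<le> ennreal e"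
      using abs_cont[OF hm hfin e0] by blast
    have "norm (real Mb / a) < 1" using Ma a1 by simp
    then have "(\<lambda>m. (real Mb / a)^m * (2*R)) \<longlonglongrightarrow> 0 * (2*R)"
      by (intro tendsto_mult LIMSEQ_power_zero tendsto_const)
    then have "eventually (\<lambda>m. (real Mb / a)^m * (2*R) < d) sequentially"
      using d0 by (auto dest: order_tendstoD(2))
    then obtain N where N: "\<And>m. m \<ge> N \<Longrightarrow> (real Mb / a)^m * (2*R) < d"
      by (auto simp: eventually_sequentially)
    show ?thesis unfolding eventually_sequentially
    proof (intro exI[of _ "Suc N"] allI impI)
      fix n assume n: "n \<ge> Suc N"
      then have nn: "n = Suc (n - 1)" by simp
      have "real Mb ^ (n-1) * (2*R) / a^(n-1) = (real Mb / a)^(n-1) * (2*R)"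
        by (simp add: power_divide)
      also have "\<dots> \<le> d" using N[of "n-1"] n by (simp add: less_imp_le)
      finally have "measure P {\<omega> \<in> space P. X (Suc (n-1)) \<omega> \<in> I} \<le> e"
        by (intro bound[OF _ dAC e0])
      then show "measure P {\<omega> \<in> space P. X n \<omega> \<in> I} \<le> e" using nn by metis
    qed
  qed
  have "limsup (\<lambda>n. ereal (measure P {\<omega> \<in> space P. X n \<omega> \<in> I})) \<le> 0"
  proof (rule ereal_le_epsilon2)
    fix e :: real assume e0: "0 < e"
    have "limsup (\<lambda>n. ereal (measure P {\<omega> \<in> space P. X n \<omega> \<in> I})) \<le> ereal e"
      by (rule Limsup_bounded) (use ev[OF e0] in \<open>auto elim: eventually_mono\<close>)
    then show "limsup (\<lambda>n. ereal (measure P {\<omega> \<in> space P. X n \<omega> \<in> I})) \<le> 0 + ereal e" by simp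
  qed
  with Ilim show False by simp
qed

end
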